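(* Let $(c_n)_{n\ge0}$ be a sequence (of elements of a commutative ring, or indeterminates) and $\alpha,\beta$ variables. Then for all positive integers $n$, $$ \det_{0\le i,j\le n-1}\big(\alpha c_{i+j}+c_{i+j+1}\big)\det_{0\le i,j\le n-1}\big(\beta c_{i+j}+c_{i+j+1}\big) =-\det_{0\le i,j\le n}\big(c_{i+j}\big)\det_{0\le i,j\le n-2}\big(\alpha\beta c_{i+j}+(\alpha+\beta)c_{i+j+1}+c_{i+j+2}\big) +\det_{0\le i,j\le n-1}\big(c_{i+j}\big)\det_{0\le i,j\le n-1}\big(\alpha\beta c_{i+j}+(\alpha+\beta)c_{i+j+1}+c_{i+j+2}\big). $$
   Context: The determinant of an empty ($0\times 0$) matrix equals $1$. *)

theory Defs
  imports "Jordan_Normal_Form.Determinant"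
begin

text \<open>Hankel determinant: det of the m x m matrix (f (i+j)) for 0 <= i,j <= m-1.
  For m = 0 this is the determinant of the empty matrix, which is 1.\<close>
definition hdet :: "nat \<Rightarrow> (nat \<Rightarrow> 'a::comm_ring_1) \<Rightarrow> 'a" where
  "hdet m f = det (mat m m (\<lambda>(i,j). f (i + j)))"

end

theory Submission
  imports Defs "Jordan_Normal_Form.Char_Poly"
begin

lemma lap_col_single:
  fixes B :: "'a::comm_ring_1 mat"
  assumes B: "B \<in> carrier_mat n n" and j: "j < n" and r: "r < n"
    and z: "\<And>i. i < n \<Longrightarrow> i \<noteq> r \<Longrightarrow> B $$ (i,j) = 0"
  shows "det B = B $$ (r,j) * cofactor B r j"
proof -
  have "det B = (\<Sum>i<n. B $$ (i,j) * cofactor B i j)" by (rule laplace_expansion_column[OF B j])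
  also have "\<dots> = B $$ (r,j) * cofactor B r j"
    using r z by (subst sum.remove[of _ r]) (auto intro!: sum.neutral)
  finally show ?thesis .
qed

lemma det_colop:
  fixes F :: "nat \<Rightarrow> nat \<Rightarrow> 'a::comm_ring_1"
  assumes N: "N \<ge> 1"
  shows "det (mat N N (\<lambda>(i,j). if j < N-1 then a * F i j + F i (j+1) else F i 0))
     = (-1)^(N-1) * det (mat N N (\<lambda>(i,j). F i j))"
proof -
  define Q :: "'a mat" where "Q = mat N N (\<lambda>(k,j). if j < N-1 then (if k = j then a else if k = j+1 then 1 else 0) else (if k = 0 then 1 else 0))"
  have s1: "(\<Sum>k=0..<N. F i k * (if k=j then a else if k=j+1 then 1 else 0)) = a * F i j + F i (j+1)"
    if j: "j < N - 1" for i j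
  proof -
    have "(\<Sum>k=0..<N. F i k * (if k=j then a else if k=j+1 then 1 else 0))
        = (\<Sum>k=0..<N. (if k=j then F i k * a else 0) + (if k=j+1 then F i k else 0))"
      by (rule sum.cong) auto
    also have "\<dots> = a * F i j + F i (j+1)" using j by (auto simp: sum.distrib mult.commute)
    finally show ?thesis .
  qed
  have s2: "(\<Sum>k=0..<N. F i k * (if k=0 then 1 else 0)) = F i 0" for i
    using N by (simp add: if_distrib[of "\<lambda>x. F i _ * x"] cong: if_cong)
  have eq: "mat N N (\<lambda>(i,j). if j < N-1 then a * F i j + F i (j+1) else F i 0) = mat N N (\<lambda>(i,j). F i j) * Q"
    by (rule eq_matI) (auto simp: Q_def scalar_prod_def s1 s2 simp del: One_nat_def)
  have Q: "Q \<in> carrier_mat N N" by (simp add: Q_def)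
  have "det Q = Q $$ (0, N-1) * cofactor Q 0 (N-1)"
    by (rule lap_col_single[OF Q]) (use N in \<open>auto simp: Q_def\<close>)
  also have "\<dots> = (-1)^(N-1) * det (mat_delete Q 0 (N-1))"
    using N by (simp add: Q_def cofactor_def)
  also have "det (mat_delete Q 0 (N-1)) = 1"
  proof -
    have D: "mat_delete Q 0 (N-1) \<in> carrier_mat (N-1) (N-1)" by (simp add: Q_def mat_delete_def)
    have "det (mat_delete Q 0 (N-1)) = prod_list (diag_mat (mat_delete Q 0 (N-1)))"
      by (rule det_upper_triangular[OF _ D]) (auto simp: upper_triangular_def Q_def mat_delete_def)
    also have "\<dots> = 1" by (simp add: prod_list_diag_prod Q_def mat_delete_def)
    finally show ?thesis .
  qed
  finally have dQ: "det Q = (-1)^(N-1)" by simp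
  show ?thesis unfolding eq
    by (subst det_mult[OF _ Q]) (auto simp: dQ mult.commute)
qed


lemma det_rowop:
  fixes F :: "nat \<Rightarrow> nat \<Rightarrow> 'a::comm_ring_1"
  assumes N: "N \<ge> 1"
  shows "det (mat N N (\<lambda>(i,j). if i < N-1 then a * F i j + F (i+1) j else F 0 j))
     = (-1)^(N-1) * det (mat N N (\<lambda>(i,j). F i j))"
proof -
  have "det (mat N N (\<lambda>(i,j). if i < N-1 then a * F i j + F (i+1) j else F 0 j))
     = det ((mat N N (\<lambda>(i,j). if i < N-1 then a * F i j + F (i+1) j else F 0 j))\<^sup>T)"
    by (rule det_transpose[symmetric, of _ N]) simp
  also have "(mat N N (\<lambda>(i,j). if i < N-1 then a * F i j + F (i+1) j else F 0 j))\<^sup>T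
     = mat N N (\<lambda>(i,j). if j < N-1 then a * F j i + F (j+1) i else F 0 i)"
    by (rule eq_matI) auto
  also have "det \<dots> = (-1)^(N-1) * det (mat N N (\<lambda>(i,j). F j i))"
    using det_colop[OF N, of a "\<lambda>i j. F j i"] by simp
  also have "mat N N (\<lambda>(i,j). F j i) = (mat N N (\<lambda>(i,j). F i j))\<^sup>T"
    by (rule eq_matI) auto
  also have "det \<dots> = det (mat N N (\<lambda>(i,j). F i j))"
    by (rule det_transpose[of _ N]) simp
  finally show ?thesis .
qed

lemma mat_delete_last: "mat_delete (mat (Suc m) (Suc m) f) m m = mat m m f"
  by (rule eq_matI) (auto simp: mat_delete_def)

lemma mat_delete_first: "mat_delete (mat (Suc m) (Suc m) f) 0 0 = mat m m (\<lambda>(i,j). f (Suc i, Suc j))"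
  by (rule eq_matI) (auto simp: mat_delete_def)

lemma cofactor_last: "cofactor (mat (Suc m) (Suc m) f) m m = det (mat m m f)"
  by (simp add: cofactor_def mat_delete_last)

lemma cofactor_first: "cofactor (mat (Suc m) (Suc m) f) 0 0 = det (mat m m (\<lambda>(i,j). f (Suc i, Suc j)))"
  by (simp add: cofactor_def mat_delete_first)

lemma det_two_last_unit:
  fixes g :: "nat \<Rightarrow> nat \<Rightarrow> 'a::comm_ring_1"
  shows "det (mat (k+2) (k+2) (\<lambda>(i,j). if j \<ge> k then (if i = j then d else 0) else g i j))
    = d * d * det (mat k k (\<lambda>(i,j). g i j))"
proof -
  let ?f = "\<lambda>(i,j). if j \<ge> k then (if i = j then d else 0) else g i j"
  have "det (mat (k+2) (k+2) ?f) = mat (k+2) (k+2) ?f $$ (k+1, k+1) * cofactor (mat (k+2) (k+2) ?f) (k+1) (k+1)"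
    by (rule lap_col_single) auto
  also have "\<dots> = d * det (mat (k+1) (k+1) ?f)"
    using cofactor_last[of "k+1" ?f] by simp
  also have "det (mat (k+1) (k+1) ?f) = mat (k+1) (k+1) ?f $$ (k, k) * cofactor (mat (k+1) (k+1) ?f) k k"
    by (rule lap_col_single) auto
  also have "\<dots> = d * det (mat k k ?f)"
    using cofactor_last[of "k" ?f] by simp
  also have "mat k k ?f = mat k k (\<lambda>(i,j). g i j)"
    by (rule eq_matI) auto
  finally show ?thesis by (simp add: mult.assoc)
qed

lemma det2:
  fixes A :: "'a::comm_ring_1 mat"
  assumes A: "A \<in> carrier_mat 2 2"
  shows "det A = A $$ (0,0) * A $$ (1,1) - A $$ (0,1) * A $$ (1,0)"
proof -
  have "det A = (\<Sum>i<2. A $$ (i,0) * cofactor A i 0)"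
    by (rule laplace_expansion_column[OF A]) simp
  also have "\<dots> = A $$ (0,0) * cofactor A 0 0 + A $$ (1,0) * cofactor A 1 0"
    by (simp add: numeral_2_eq_2)
  also have "cofactor A 0 0 = A $$ (1,1)"
    using A by (simp add: cofactor_def det_single mat_delete_def)
  also have "cofactor A 1 0 = - A $$ (0,1)"
    using A by (simp add: cofactor_def det_single mat_delete_def)
  finally show ?thesis by (simp add: algebra_simps)
qed

lemma det_id_two_cols:
  fixes a b :: "nat \<Rightarrow> 'a::comm_ring_1"
  shows "det (mat (k+2) (k+2) (\<lambda>(i,j). if j = k then a i else if j = k+1 then b i else if i = j then 1 else 0))
    = a k * b (k+1) - b k * a (k+1)"
proof (induction k arbitrary: a b)
  case 0
  show ?case by (subst det2) auto
next
  case (Suc k)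
  let ?f = "\<lambda>(i,j). if j = Suc k then a i else if j = Suc k+1 then b i else if i = j then (1::'a) else 0"
  have "det (mat (Suc k+2) (Suc k+2) ?f) = mat (Suc k+2) (Suc k+2) ?f $$ (0, 0) * cofactor (mat (Suc k+2) (Suc k+2) ?f) 0 0"
    by (rule lap_col_single) auto
  also have "\<dots> = det (mat (k+2) (k+2) (\<lambda>(i,j). ?f (Suc i, Suc j)))"
    using cofactor_first[of "k+2" ?f] by simp
  also have "mat (k+2) (k+2) (\<lambda>(i,j). ?f (Suc i, Suc j)) = mat (k+2) (k+2) (\<lambda>(i,j). if j = k then a (Suc i) else if j = k+1 then b (Suc i) else if i = j then 1 else 0)"
    by (rule eq_matI) auto
  also have "det \<dots> = a (Suc k) * b (Suc k + 1) - b (Suc k) * a (Suc k + 1)"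
    using Suc.IH[of "\<lambda>i. a (Suc i)" "\<lambda>i. b (Suc i)"] by simp
  finally show ?case .
qed


lemma DJ_pre:
  fixes M :: "'a::comm_ring_1 mat"
  assumes M: "M \<in> carrier_mat (k+2) (k+2)"
  shows "det M * (det (mat_delete M k k) * det (mat_delete M (k+1) (k+1))
            - det (mat_delete M (k+1) k) * det (mat_delete M k (k+1)))
       = det M * (det M * det (mat k k (\<lambda>(i,j). M $$ (i,j))))"
proof -
  define A where "A = adj_mat M"
  have A: "A \<in> carrier_mat (k+2) (k+2)" using adj_mat(1)[OF M] A_def by simp
  have MA: "(\<Sum>l=0..<k+2. M$$(i,l) * A$$(l,j)) = (if i = j then det M else 0)"
    if ij: "i<k+2" "j<k+2" for i j
  proof -
    have "(M * A) $$ (i,j) = (det M \<cdot>\<^sub>m 1\<^sub>m (k+2)) $$ (i,j)" using adj_mat(2)[OF M] A_def by simp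
    thus ?thesis using ij M A by (simp add: scalar_prod_def)
  qed
  define Nm where "Nm = mat (k+2) (k+2) (\<lambda>(i,j). if j = k then A$$(i,k) else if j = k+1 then A$$(i,k+1) else if i = j then 1 else 0)"
  have Nm: "Nm \<in> carrier_mat (k+2) (k+2)" by (simp add: Nm_def)
  have prod: "M * Nm = mat (k+2) (k+2) (\<lambda>(i,j). if j \<ge> k then (if i = j then det M else 0) else M$$(i,j))"
  proof (rule eq_matI)
    fix i j assume "i < dim_row (mat (k+2) (k+2) (\<lambda>(i,j). if j \<ge> k then (if i = j then det M else 0) else M$$(i,j)))"
      "j < dim_col (mat (k+2) (k+2) (\<lambda>(i,j). if j \<ge> k then (if i = j then det M else 0) else M$$(i,j)))"
    hence ij: "i < k+2" "j < k+2" by auto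
    show "(M*Nm)$$(i,j) = mat (k+2) (k+2) (\<lambda>(i,j). if j \<ge> k then (if i = j then det M else 0) else M$$(i,j)) $$ (i,j)"
    proof (cases "j \<ge> k")
      case True
      then have jj: "j = k \<or> j = Suc k" using ij by auto
      have "(M*Nm)$$(i,j) = (\<Sum>l=0..<k+2. M$$(i,l) * A$$(l,j))"
        using jj ij M by (elim disjE) (auto simp: Nm_def scalar_prod_def intro!: sum.cong)
      then show ?thesis using MA ij True by simp
    next
      case False
      have "(M*Nm)$$(i,j) = (\<Sum>l=0..<k+2. M$$(i,l) * (if l = j then 1 else 0))"
        using ij M False by (auto simp: Nm_def scalar_prod_def intro!: sum.cong)
      also have "\<dots> = M$$(i,j)" using ij by (simp add: if_distrib[of "\<lambda>x. M $$ (i, _) * x"] cong: if_cong)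
      finally show ?thesis using False ij by simp
    qed
  qed (use M in \<open>auto simp: Nm_def\<close>)
  have d1: "det (M * Nm) = det M * det Nm" by (rule det_mult[OF M Nm])
  have d2: "det (M * Nm) = det M * det M * det (mat k k (\<lambda>(i,j). M $$ (i,j)))"
    by (simp only: prod det_two_last_unit)
  have d3: "det Nm = A$$(k,k) * A$$(k+1,k+1) - A$$(k,k+1) * A$$(k+1,k)"
    unfolding Nm_def using det_id_two_cols[of k "\<lambda>i. A$$(i,k)" "\<lambda>i. A$$(i,k+1)"] by simp
  have e: "A$$(k,k) = det (mat_delete M k k)" "A$$(k+1,k+1) = det (mat_delete M (k+1) (k+1))"
    "A$$(k,k+1) = - det (mat_delete M (k+1) k)" "A$$(k+1,k) = - det (mat_delete M k (k+1))"
    using M by (auto simp: A_def adj_mat_def cofactor_def)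
  show ?thesis using d1 d2 d3 e by (simp add: algebra_simps)
qed


lemma monic_cancel:
  fixes p x y :: "'a::comm_ring_1 poly"
  assumes m: "coeff p (degree p) = 1" and e: "p * x = p * y"
  shows "x = y"
proof (rule ccontr)
  assume "x \<noteq> y" hence nz: "x - y \<noteq> 0" by simp
  have "p * (x - y) = 0" using e by (simp add: algebra_simps)
  hence "coeff (p * (x-y)) (degree p + degree (x-y)) = 0" by simp
  moreover have "coeff (p*(x-y)) (degree p + degree (x-y)) = coeff (x-y) (degree (x-y))"
    using coeff_mult_degree_sum[of p "x-y"] m by simp
  moreover have "coeff (x-y) (degree (x-y)) \<noteq> 0" using nz by (rule leading_coeff_neq_0)
  ultimately show False by metis
qed

lemma map_mat_delete: "map_mat f (mat_delete A i j) = mat_delete (map_mat f A) i j"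
  by (rule eq_matI) (auto simp: mat_delete_def)

lemma DJ:
  fixes M :: "'a::comm_ring_1 mat"
  assumes M: "M \<in> carrier_mat (k+2) (k+2)"
  shows "det (mat_delete M k k) * det (mat_delete M (k+1) (k+1))
            - det (mat_delete M (k+1) k) * det (mat_delete M k (k+1))
       = det M * det (mat k k (\<lambda>(i,j). M $$ (i,j)))"
proof -
  define KK where "KK = char_poly_matrix (map_mat uminus M)"
  have KK: "KK \<in> carrier_mat (k+2) (k+2)" using M by (simp add: KK_def)
  have mon: "coeff (det KK) (degree (det KK)) = 1"
    using degree_monic_char_poly[of "map_mat uminus M" "k+2"] M by (simp add: KK_def char_poly_def)
  have hK: "map_mat (\<lambda>p. poly p 0) KK = M"
    using M by (auto simp: KK_def char_poly_matrix_def intro!: eq_matI)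
  have eqK: "det (mat_delete KK k k) * det (mat_delete KK (k+1) (k+1))
            - det (mat_delete KK (k+1) k) * det (mat_delete KK k (k+1))
       = det KK * det (mat k k (\<lambda>(i,j). KK $$ (i,j)))"
    by (rule monic_cancel[OF mon DJ_pre[OF KK]])
  have hh: "comm_ring_hom (\<lambda>p::'a poly. poly p 0)" by unfold_locales auto
  have del: "poly (det (mat_delete KK i j)) 0 = det (mat_delete M i j)" for i j
    using comm_ring_hom.hom_det[OF hh, of "mat_delete KK i j"] by (simp add: map_mat_delete hK)
  have dK: "poly (det KK) 0 = det M" using comm_ring_hom.hom_det[OF hh, of KK] by (simp add: hK)
  have "map_mat (\<lambda>p. poly p 0) (mat k k (\<lambda>(i,j). KK $$ (i,j))) = mat k k (\<lambda>(i,j). M $$ (i,j))"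
    using KK by (auto simp: hK[symmetric] intro!: eq_matI)
  hence dR: "poly (det (mat k k (\<lambda>(i,j). KK $$ (i,j)))) 0 = det (mat k k (\<lambda>(i,j). M $$ (i,j)))"
    using comm_ring_hom.hom_det[OF hh, of "mat k k (\<lambda>(i,j). KK $$ (i,j))"] by simp
  from arg_cong[OF eqK, of "\<lambda>p. poly p 0"] dR show ?thesis by (simp add: del dK)
qed


lemma det_Y:
  fixes c G g h :: "nat \<Rightarrow> 'a::comm_ring_1"
  assumes G: "\<And>k. G k = \<alpha> * \<beta> * c k + (\<alpha> + \<beta>) * c (k+1) + c (k+2)"
    and g: "\<And>k. g k = \<alpha> * c k + c (k+1)"
    and h: "\<And>k. h k = \<beta> * c k + c (k+1)"
  shows "det (mat (N+1) (N+1) (\<lambda>(i,j). if i < N then (if j < N then G (i+j) else h i)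
            else (if j < N then g j else c 0))) = hdet (N+1) c"
proof -
  define F2 where "F2 = (\<lambda>i j. if j < N then \<alpha> * c (i+j) + c (i+j+1) else c i)"
  have "mat (N+1) (N+1) (\<lambda>(i,j). F2 i j) = mat (N+1) (N+1) (\<lambda>(i,j). if j < N+1-1 then \<alpha> * c (i+j) + c (i+(j+1)) else c (i+0))"
    by (rule eq_matI) (auto simp: F2_def)
  also have "det \<dots> = (-1)^(N+1-1) * det (mat (N+1) (N+1) (\<lambda>(i,j). c (i+j)))"
    by (rule det_colop[of "N+1" \<alpha> "\<lambda>i j. c (i+j)"]) simp
  finally have c1: "det (mat (N+1) (N+1) (\<lambda>(i,j). F2 i j)) = (-1)^N * hdet (N+1) c"
    unfolding hdet_def by simp
  have "mat (N+1) (N+1) (\<lambda>(i,j). if i < N then (if j < N then G (i+j) else h i)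
            else (if j < N then g j else c 0))
      = mat (N+1) (N+1) (\<lambda>(i,j). if i < N+1-1 then \<beta> * F2 i j + F2 (i+1) j else F2 0 j)"
    by (rule eq_matI) (auto simp: F2_def G g h algebra_simps)
  also have "det \<dots> = (-1)^(N+1-1) * det (mat (N+1) (N+1) (\<lambda>(i,j). F2 i j))"
    by (rule det_rowop[of "N+1" \<beta> F2]) simp
  finally show ?thesis using c1 by simp
qed

lemma main_aux:
  fixes c G g h :: "nat \<Rightarrow> 'a::comm_ring_1"
  assumes G: "\<And>k. G k = \<alpha> * \<beta> * c k + (\<alpha> + \<beta>) * c (k+1) + c (k+2)"
    and g: "\<And>k. g k = \<alpha> * c k + c (k+1)"
    and h: "\<And>k. h k = \<beta> * c k + c (k+1)"
    and n: "n \<ge> 1"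
  shows "hdet n g * hdet n h = - hdet (n+1) c * hdet (n-1) G + hdet n c * hdet n G"
proof -
  define Y where "Y = (\<lambda>N. mat (N+1) (N+1) (\<lambda>(i,j). if i < N then (if j < N then G (i+j) else h i)
            else (if j < N then g j else c 0)))"
  have dY: "det (Y N) = hdet (N+1) c" for N unfolding Y_def by (rule det_Y[OF G g h])
  obtain k where k: "n = k+1" using n by (metis add.commute le_add_diff_inverse)
  have YC: "Y n \<in> carrier_mat (k+2) (k+2)" by (simp add: Y_def k)
  have DJn: "det (mat_delete (Y n) k k) * det (mat_delete (Y n) (k+1) (k+1))
            - det (mat_delete (Y n) (k+1) k) * det (mat_delete (Y n) k (k+1))
       = det (Y n) * det (mat k k (\<lambda>(i,j). Y n $$ (i,j)))"
    by (rule DJ[OF YC])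
  have e1: "mat_delete (Y n) k k = Y k"
    by (rule eq_matI) (auto simp: Y_def mat_delete_def k)
  have e2: "mat_delete (Y n) (k+1) (k+1) = mat n n (\<lambda>(i,j). G (i+j))"
    by (rule eq_matI) (auto simp: Y_def mat_delete_def k)
  have e3: "mat k k (\<lambda>(i,j). Y n $$ (i,j)) = mat k k (\<lambda>(i,j). G (i+j))"
    by (rule eq_matI) (auto simp: Y_def k)
  have e4: "mat_delete (Y n) (k+1) k = mat n n (\<lambda>(i,j). if j < n - 1 then \<alpha> * h (i + j) + h (i + (j + 1)) else h (i + 0))"
    by (rule eq_matI) (auto simp: Y_def mat_delete_def k G h algebra_simps)
  have e5: "mat_delete (Y n) k (k+1) = mat n n (\<lambda>(i,j). if i < n - 1 then \<beta> * g (i + j) + g (i + 1 + j) else g (0 + j))"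
    by (rule eq_matI) (auto simp: Y_def mat_delete_def k G g algebra_simps)
  have d4: "det (mat_delete (Y n) (k+1) k) = (-1)^(n-1) * hdet n h"
    unfolding e4 hdet_def by (rule det_colop[of n \<alpha> "\<lambda>i j. h (i+j)", OF n])
  have d5: "det (mat_delete (Y n) k (k+1)) = (-1)^(n-1) * hdet n g"
    unfolding e5 hdet_def by (rule det_rowop[of n \<beta> "\<lambda>i j. g (i+j)", OF n])
  have s: "((-1::'a)^(n-1)) * (-1)^(n-1) = 1"
    by (simp add: power_mult_distrib[symmetric])
  have "hdet n c * hdet n G - ((-1)^(n-1) * (-1)^(n-1)) * (hdet n h * hdet n g) = hdet (n+1) c * hdet (n-1) G"
    using DJn unfolding e1 e2 e3 d4 d5 dY by (simp add: hdet_def k algebra_simps)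
  then show ?thesis unfolding s by (simp add: algebra_simps)
qed

theorem lemma9:
  fixes c :: "nat \<Rightarrow> 'a::comm_ring_1" and \<alpha> \<beta> :: 'a and n :: nat
  assumes "n \<ge> 1"
  shows "hdet n (\<lambda>k. \<alpha> * c k + c (k+1)) * hdet n (\<lambda>k. \<beta> * c k + c (k+1))
       = - hdet (n+1) c * hdet (n-1) (\<lambda>k. \<alpha> * \<beta> * c k + (\<alpha> + \<beta>) * c (k+1) + c (k+2))
         + hdet n c * hdet n (\<lambda>k. \<alpha> * \<beta> * c k + (\<alpha> + \<beta>) * c (k+1) + c (k+2))"
  by (rule main_aux[OF _ _ _ assms]) auto

end
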